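(* Let $F$ be a field of characteristic zero, $G$ a finite group, $A$ a $G$-graded PI-algebra, $n$ a positive integer, and let $\mathcal{U}(n;A)\subseteq M_n(\mathcal{U}_G(A))$ be the algebra generated by the generic matrices $\xi_k^{(g)}=(x_{ij,k}^{(g)}+T_G(A))_{1\le i,j\le n}$, $k\in\mathbb{N}$, $g\in G$. Let $f_1,\dots,f_n\in\mathcal{U}(n;A)$, fix $k\in\{1,\dots,n\}$, and let $f_i^k$ denote the $k$-th column of $f_i$ (a column vector with entries in $\mathcal{U}_G(A)$). Then $\{f_1^k,\dots,f_n^k\}$ is linearly independent over $F$ if and only if $\{f_1,\dots,f_n\}$ is linearly independent over $F$.
   Context: All algebras are associative and unitary. The $x_{ij,k}^{(g)}$ are pairwise distinct free variables of degree $g$. $F\langle X\rangle$ is the free associative algebra on a disjoint union $X=\bigcup_{g\in G}X^g$ of countable sets of variables of degree $g$, naturally $G$-graded. For a $G$-graded algebra $A$, $T_G(A)$ is its ideal of graded polynomial identities and $\mathcal{U}_G(A)=F\langle X\rangle/T_G(A)$ its relatively free $G$-graded algebra. *)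

theory Defs
  imports Main
begin

section \<open>Free associative algebra F<V> as finitely supported functions on words\<close>

type_synonym ('v, 'f) fpoly = "'v list \<Rightarrow> 'f"

definition is_poly :: "('v, 'f::zero) fpoly \<Rightarrow> bool" where
  "is_poly p \<longleftrightarrow> finite {w. p w \<noteq> 0}"

definition pzero :: "('v, 'f::zero) fpoly" where
  "pzero = (\<lambda>w. 0)"

definition pone :: "('v, 'f::{zero,one}) fpoly" where
  "pone = (\<lambda>w. if w = [] then 1 else 0)"

definition pvar :: "'v \<Rightarrow> ('v, 'f::{zero,one}) fpoly" where
  "pvar v = (\<lambda>w. if w = [v] then 1 else 0)"

definition padd :: "('v, 'f::plus) fpoly \<Rightarrow> ('v, 'f) fpoly \<Rightarrow> ('v, 'f) fpoly" where
  "padd p q = (\<lambda>w. p w + q w)"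

definition psmul :: "'f::times \<Rightarrow> ('v, 'f) fpoly \<Rightarrow> ('v, 'f) fpoly" where
  "psmul c p = (\<lambda>w. c * p w)"

definition pmul :: "('v, 'f::comm_semiring_1) fpoly \<Rightarrow> ('v, 'f) fpoly \<Rightarrow> ('v, 'f) fpoly" where
  "pmul p q = (\<lambda>w. \<Sum>i\<in>{0..length w}. p (take i w) * q (drop i w))"

definition psum :: "('i \<Rightarrow> ('v, 'f::comm_monoid_add) fpoly) \<Rightarrow> 'i set \<Rightarrow> ('v, 'f) fpoly" where
  "psum P I = (\<lambda>w. \<Sum>i\<in>I. P i w)"

definition peval :: "('f::zero \<Rightarrow> 'a::{monoid_mult,comm_monoid_add} \<Rightarrow> 'a)
    \<Rightarrow> ('v \<Rightarrow> 'a) \<Rightarrow> ('v, 'f) fpoly \<Rightarrow> 'a" where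
  "peval smul \<phi> p = (\<Sum>w\<in>{w. p w \<noteq> 0}. smul (p w) (prod_list (map \<phi> w)))"

definition f_algebra :: "('f::field \<Rightarrow> 'a::ring_1 \<Rightarrow> 'a) \<Rightarrow> bool" where
  "f_algebra smul \<longleftrightarrow>
     (\<forall>c a b. smul c (a + b) = smul c a + smul c b) \<and>
     (\<forall>c d a. smul (c + d) a = smul c a + smul d a) \<and>
     (\<forall>c d a. smul (c * d) a = smul c (smul d a)) \<and>
     (\<forall>a. smul 1 a = a) \<and>
     (\<forall>c a b. smul c (a * b) = smul c a * b) \<and>
     (\<forall>c a b. smul c (a * b) = a * smul c b)"

text \<open>A G-grading A = (direct sum over g in G of A_g) with A_g A_h \<subseteq> A_(g h); the group G is
  a finite group written additively (type class group_add, not necessarily commutative).\<close>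
definition graded_algebra ::
  "('f::field \<Rightarrow> 'a::ring_1 \<Rightarrow> 'a) \<Rightarrow> ('g::{group_add,finite} \<Rightarrow> 'a set) \<Rightarrow> bool" where
  "graded_algebra smul Agr \<longleftrightarrow>
     (\<forall>g. 0 \<in> Agr g \<and> (\<forall>x\<in>Agr g. \<forall>y\<in>Agr g. x + y \<in> Agr g) \<and>
          (\<forall>c. \<forall>x\<in>Agr g. smul c x \<in> Agr g)) \<and>
     (\<forall>a. \<exists>!d. (\<forall>g. d g \<in> Agr g) \<and> a = (\<Sum>g\<in>UNIV. d g)) \<and>
     (\<forall>g h. \<forall>x\<in>Agr g. \<forall>y\<in>Agr h. x * y \<in> Agr (g + h))"

definition is_PI :: "('f::field \<Rightarrow> 'a::ring_1 \<Rightarrow> 'a) \<Rightarrow> bool" where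
  "is_PI smul \<longleftrightarrow>
     (\<exists>p :: (nat, 'f) fpoly. is_poly p \<and> p \<noteq> pzero \<and> (\<forall>\<phi>. peval smul \<phi> p = 0))"

text \<open>Variables of degree g: X^g = {g} \<times> (nat \<times> nat \<times> nat), a countable set; the variable
  (g,(i,j,k)) plays the role of x_{ij,k}^{(g)} (0-based indices).\<close>
type_synonym 'g gvar = "'g \<times> nat \<times> nat \<times> nat"

definition graded_assignment :: "('g \<Rightarrow> 'a set) \<Rightarrow> ('g gvar \<Rightarrow> 'a) \<Rightarrow> bool" where
  "graded_assignment Agr \<phi> \<longleftrightarrow> (\<forall>v. \<phi> v \<in> Agr (fst v))"

definition TG :: "('f::field \<Rightarrow> 'a::ring_1 \<Rightarrow> 'a) \<Rightarrow> ('g \<Rightarrow> 'a set) \<Rightarrow> ('g gvar, 'f) fpoly set" where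
  "TG smul Agr = {p. is_poly p \<and> (\<forall>\<phi>. graded_assignment Agr \<phi> \<longrightarrow> peval smul \<phi> p = 0)}"

text \<open>n x n matrices over F<X>, entries indexed by 0..n-1 (entries outside are irrelevant).\<close>
type_synonym ('g, 'f) gmat = "nat \<Rightarrow> nat \<Rightarrow> ('g gvar, 'f) fpoly"

definition mat_one :: "('g, 'f::{zero,one}) gmat" where
  "mat_one = (\<lambda>r s. if r = s then pone else pzero)"

definition generic_matrix :: "'g \<Rightarrow> nat \<Rightarrow> ('g, 'f::{zero,one}) gmat" where
  "generic_matrix g k = (\<lambda>i j. pvar (g, i, j, k))"

definition mat_add :: "('g, 'f::plus) gmat \<Rightarrow> ('g, 'f) gmat \<Rightarrow> ('g, 'f) gmat" where
  "mat_add M N = (\<lambda>r s. padd (M r s) (N r s))"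

definition mat_smul :: "'f::times \<Rightarrow> ('g, 'f) gmat \<Rightarrow> ('g, 'f) gmat" where
  "mat_smul c M = (\<lambda>r s. psmul c (M r s))"

definition mat_mul :: "nat \<Rightarrow> ('g, 'f::comm_semiring_1) gmat \<Rightarrow> ('g, 'f) gmat \<Rightarrow> ('g, 'f) gmat" where
  "mat_mul n M N = (\<lambda>r s. psum (\<lambda>t. pmul (M r t) (N t s)) {..<n})"

text \<open>The (unital) F-subalgebra of M_n(F<X>) generated by the generic matrices.  Its image
  under the entrywise quotient map F<X> \<rightarrow> U_G(A) is U(n;A).\<close>
inductive_set generic_alg :: "nat \<Rightarrow> ('g, 'f::field) gmat set" for n where
  one: "mat_one \<in> generic_alg n"
| gen: "generic_matrix g k \<in> generic_alg n"
| add: "M \<in> generic_alg n \<Longrightarrow> N \<in> generic_alg n \<Longrightarrow> mat_add M N \<in> generic_alg n"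
| smul: "M \<in> generic_alg n \<Longrightarrow> mat_smul c M \<in> generic_alg n"
| mul: "M \<in> generic_alg n \<Longrightarrow> N \<in> generic_alg n \<Longrightarrow> mat_mul n M N \<in> generic_alg n"

text \<open>The family f_0..f_(n-1) of matrices (classes mod T_G(A) entrywise) is F-linearly independent.\<close>
definition mats_lin_indep ::
  "('f::field \<Rightarrow> 'a::ring_1 \<Rightarrow> 'a) \<Rightarrow> ('g \<Rightarrow> 'a set) \<Rightarrow> nat \<Rightarrow> (nat \<Rightarrow> ('g, 'f) gmat) \<Rightarrow> bool" where
  "mats_lin_indep smul Agr n f \<longleftrightarrow>
     (\<forall>c :: nat \<Rightarrow> 'f.
        (\<forall>r<n. \<forall>s<n. psum (\<lambda>i. psmul (c i) (f i r s)) {..<n} \<in> TG smul Agr)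
        \<longrightarrow> (\<forall>i<n. c i = 0))"

definition cols_lin_indep ::
  "('f::field \<Rightarrow> 'a::ring_1 \<Rightarrow> 'a) \<Rightarrow> ('g \<Rightarrow> 'a set) \<Rightarrow> nat \<Rightarrow> (nat \<Rightarrow> ('g, 'f) gmat) \<Rightarrow> nat \<Rightarrow> bool" where
  "cols_lin_indep smul Agr n f k \<longleftrightarrow>
     (\<forall>c :: nat \<Rightarrow> 'f.
        (\<forall>r<n. psum (\<lambda>i. psmul (c i) (f i r k)) {..<n} \<in> TG smul Agr)
        \<longrightarrow> (\<forall>i<n. c i = 0))"

end

theory Submission
  imports Defs
begin

definition sw :: "nat \<Rightarrow> nat \<Rightarrow> nat \<Rightarrow> nat" where
  "sw a b x = (if x = a then b else if x = b then a else x)"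

definition vsw :: "nat \<Rightarrow> nat \<Rightarrow> 'g gvar \<Rightarrow> 'g gvar" where
  "vsw a b v = (case v of (g,i,j,m) \<Rightarrow> (g, sw a b i, sw a b j, m))"

definition ren :: "nat \<Rightarrow> nat \<Rightarrow> ('g gvar, 'f) fpoly \<Rightarrow> ('g gvar, 'f) fpoly" where
  "ren a b p = (\<lambda>w. p (map (vsw a b) w))"

lemma sw_sw[simp]: "sw a b (sw a b x) = x"
  by (simp add: sw_def)

lemma vsw_vsw[simp]: "vsw a b (vsw a b v) = v"
  by (cases v) (auto simp: vsw_def)

lemma map_vsw_vsw[simp]: "map (vsw a b) (map (vsw a b) w) = w"
  by (induction w) auto

lemma vsw_comp[simp]: "vsw a b \<circ> vsw a b = id"
  by (simp add: fun_eq_iff)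

lemma vsw_fst[simp]: "fst (vsw a b v) = fst v"
  by (cases v) (auto simp: vsw_def)

lemma inj_map_vsw: "inj (map (vsw a b))"
  by (metis injI map_vsw_vsw)

lemma sw_inj: "inj (sw a b)"
  by (metis injI sw_sw)

lemma sw_lt: "a < n \<Longrightarrow> b < n \<Longrightarrow> sw a b ` {..<n} = {..<n}"
proof -
  assume h: "a < n" "b < n"
  have 1: "sw a b ` {..<n} \<subseteq> {..<n}" using h by (auto simp: sw_def)
  have "{..<n} \<subseteq> sw a b ` {..<n}"
  proof
    fix x assume "x \<in> {..<n}"
    hence "sw a b x \<in> {..<n}" using h by (auto simp: sw_def)
    thus "x \<in> sw a b ` {..<n}" by (metis image_eqI sw_sw)
  qed
  with 1 show ?thesis by blast
qed

lemma ren_set: "{w. ren a b p w \<noteq> 0} = map (vsw a b) ` {w. p w \<noteq> 0}"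
proof -
  have "\<And>w. ren a b p w \<noteq> 0 \<longleftrightarrow> w \<in> map (vsw a b) ` {w. p w \<noteq> 0}"
  proof
    fix w assume "ren a b p w \<noteq> 0"
    thus "w \<in> map (vsw a b) ` {w. p w \<noteq> 0}"
      by (intro image_eqI[of _ _ "map (vsw a b) w"]) (auto simp: ren_def)
  next
    fix w assume "w \<in> map (vsw a b) ` {w. p w \<noteq> 0}"
    thus "ren a b p w \<noteq> 0" by (auto simp: ren_def)
  qed
  thus ?thesis by blast
qed

lemma peval_ren:
  "peval smul \<phi> (ren a b p) = peval smul (\<phi> \<circ> vsw a b) p"
proof -
  have "peval smul \<phi> (ren a b p) =
     (\<Sum>w\<in>map (vsw a b) ` {w. p w \<noteq> 0}. smul (ren a b p w) (prod_list (map \<phi> w)))"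
    unfolding peval_def ren_set ..
  also have "\<dots> = (\<Sum>w\<in>{w. p w \<noteq> 0}. smul (ren a b p (map (vsw a b) w))
                        (prod_list (map \<phi> (map (vsw a b) w))))"
    by (subst sum.reindex) (auto intro: inj_on_subset[OF inj_map_vsw])
  also have "\<dots> = peval smul (\<phi> \<circ> vsw a b) p"
    by (simp add: peval_def ren_def)
  finally show ?thesis .
qed

lemma TG_ren: "p \<in> TG smul Agr \<Longrightarrow> ren a b p \<in> TG smul Agr"
proof -
  assume p: "p \<in> TG smul Agr"
  have "is_poly (ren a b p)" using p
    unfolding TG_def is_poly_def ren_set by auto
  moreover have "\<forall>\<phi>. graded_assignment Agr \<phi> \<longrightarrow> peval smul \<phi> (ren a b p) = 0"
  proof (intro allI impI)
    fix \<phi> :: "_ \<Rightarrow> _" assume "graded_assignment Agr \<phi>"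
    hence "graded_assignment Agr (\<phi> \<circ> vsw a b)"
      unfolding graded_assignment_def by (metis comp_apply vsw_fst)
    thus "peval smul \<phi> (ren a b p) = 0" using p
      by (simp add: peval_ren TG_def)
  qed
  ultimately show ?thesis by (simp add: TG_def)
qed

lemma ren_pmul: "ren a b (pmul p q) = pmul (ren a b p) (ren a b q)"
  by (simp add: ren_def pmul_def take_map drop_map)

lemma ren_psum: "ren a b (psum P I) = psum (\<lambda>i. ren a b (P i)) I"
  by (simp add: ren_def psum_def)

lemma ren_generic:
  assumes "M \<in> generic_alg n" "a < n" "b < n"
  shows "ren a b (M r s) = M (sw a b r) (sw a b s)"
  using assms(1)
proof (induction arbitrary: r s)
  case one
  have "sw a b r = sw a b s \<longleftrightarrow> r = s" by (metis sw_sw)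
  then show ?case
    by (auto simp: mat_one_def ren_def pone_def pzero_def)
next
  case (gen g k)
  have "\<And>w. (map (vsw a b) w = [(g, r, s, k)]) \<longleftrightarrow> (w = [(g, sw a b r, sw a b s, k)])"
    by (metis (no_types, lifting) list.simps(8,9) map_vsw_vsw vsw_def case_prod_conv sw_sw)
  then show ?case
    by (simp add: generic_matrix_def ren_def pvar_def)
next
  case (add M N)
  then show ?case by (simp add: mat_add_def ren_def padd_def fun_eq_iff)
next
  case (smul M c)
  then show ?case by (simp add: mat_smul_def ren_def psmul_def fun_eq_iff)
next
  case (mul M N)
  have "ren a b (mat_mul n M N r s) =
        psum (\<lambda>t. pmul (M (sw a b r) (sw a b t)) (N (sw a b t) (sw a b s))) {..<n}"
    by (simp add: mat_mul_def ren_psum ren_pmul mul.IH)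
  also have "\<dots> = psum (\<lambda>t. pmul (M (sw a b r) t) (N t (sw a b s))) (sw a b ` {..<n})"
    unfolding psum_def
    by (subst sum.reindex) (auto intro: inj_on_subset[OF sw_inj])
  also have "\<dots> = mat_mul n M N (sw a b r) (sw a b s)"
    using assms by (simp add: sw_lt mat_mul_def)
  finally show ?case .
qed

theorem corollary6p2:
  fixes smul :: "'f::field_char_0 \<Rightarrow> 'a::ring_1 \<Rightarrow> 'a"
    and Agr :: "'g::{group_add,finite} \<Rightarrow> 'a set"
    and n k :: nat
    and f :: "nat \<Rightarrow> ('g, 'f) gmat"
  assumes "f_algebra smul"
    and "graded_algebra smul Agr"
    and "is_PI smul"
    and "0 < n"
    and gen: "\<forall>i<n. f i \<in> generic_alg n"
    and kn: "k < n"
  shows "cols_lin_indep smul Agr n f k \<longleftrightarrow> mats_lin_indep smul Agr n f"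
proof
  assume "cols_lin_indep smul Agr n f k"
  thus "mats_lin_indep smul Agr n f"
    unfolding cols_lin_indep_def mats_lin_indep_def using kn by blast
next
  assume m: "mats_lin_indep smul Agr n f"
  show "cols_lin_indep smul Agr n f k"
    unfolding cols_lin_indep_def
  proof (rule allI, rule impI)
    fix c :: "nat \<Rightarrow> 'f"
    assume col: "\<forall>r<n. psum (\<lambda>i. psmul (c i) (f i r k)) {..<n} \<in> TG smul Agr"
    have "\<forall>r<n. \<forall>s<n. psum (\<lambda>i. psmul (c i) (f i r s)) {..<n} \<in> TG smul Agr"
    proof (intro allI impI)
      fix r s assume r: "r < n" and s: "s < n"
      have r0: "sw k s r < n" using r s kn by (auto simp: sw_def)
      have "ren k s (psum (\<lambda>i. psmul (c i) (f i (sw k s r) k)) {..<n}) \<in> TG smul Agr"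
        using col r0 by (intro TG_ren) blast
      moreover have "ren k s (psum (\<lambda>i. psmul (c i) (f i (sw k s r) k)) {..<n})
          = psum (\<lambda>i. psmul (c i) (f i r s)) {..<n}"
      proof -
        have "\<And>i. i \<in> {..<n} \<Longrightarrow> ren k s (psmul (c i) (f i (sw k s r) k)) = psmul (c i) (f i r s)"
        proof -
          fix i assume "i \<in> {..<n}"
          hence "ren k s (f i (sw k s r) k) = f i r s"
            using ren_generic[of "f i" n k s "sw k s r" k] gen kn s by (simp add: sw_def)
          thus "ren k s (psmul (c i) (f i (sw k s r) k)) = psmul (c i) (f i r s)"
            by (simp add: ren_def psmul_def fun_eq_iff)
        qed
        hence "psum (\<lambda>i. ren k s (psmul (c i) (f i (sw k s r) k))) {..<n}
            = psum (\<lambda>i. psmul (c i) (f i r s)) {..<n}"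
          unfolding psum_def by (intro ext sum.cong) auto
        thus ?thesis by (simp only: ren_psum)
      qed
      ultimately show "psum (\<lambda>i. psmul (c i) (f i r s)) {..<n} \<in> TG smul Agr" by simp
    qed
    moreover have "(\<forall>r<n. \<forall>s<n. psum (\<lambda>i. psmul (c i) (f i r s)) {..<n} \<in> TG smul Agr)
        \<longrightarrow> (\<forall>i<n. c i = 0)"
      using m unfolding mats_lin_indep_def by (rule spec)
    ultimately show "\<forall>i<n. c i = 0" by (rule mp[rotated])
  qed
qed

end
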